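(* Assume the index sets are ordered ($\mathcal I_1=\{1,\dots,l\}$, $\mathcal I_0=\{l+1,\dots,n\}$). Let $\phi:\mathcal X^l\times\mathcal Y^n\to\mathcal X^n$ be any decoder and $\varepsilon\equiv\Pr(\phi(A\mathbf X,\mathbf Y)\neq\mathbf X)>0$. Then $$\sum_{i=l+1}^nH(C_i\mid C_1^{i-1},\mathbf Y)\le\varepsilon\Big[n+\log\frac1\varepsilon+\log e\Big],$$ where $e$ is the base of the natural logarithm and all logarithms (including in entropies) are to base $|\mathcal X|$.
   Context: $\mathcal X,\mathcal Y$ finite, $|\mathcal X|\ge2$; $(\mathbf X,\mathbf Y)$ random on $\mathcal X^n\times\mathcal Y^n$; $A:\mathcal X^n\to\mathcal X^l$; $B:\mathcal X^n\to\mathcal X^{n-l}$ such that $T(x)\equiv(Ax,Bx)\in\mathcal X^n$ (first the entries of $Ax$, then those of $Bx$) defines a bijection $T:\mathcal X^n\to\mathcal X^n$. $\mathbf C=(C_1,\dots,C_n)=T(\mathbf X)$ and $C_1^{i-1}=(C_1,\dots,C_{i-1})$. *)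

theory Defs
  imports "HOL-Probability.Probability"
begin

definition cond_entropy :: "real \<Rightarrow> 'a pmf \<Rightarrow> ('a \<Rightarrow> 'b) \<Rightarrow> ('a \<Rightarrow> 'c) \<Rightarrow> real" where
  "cond_entropy b M F G =
     (\<Sum>uv\<in>set_pmf (map_pmf (\<lambda>\<omega>. (F \<omega>, G \<omega>)) M).
        - pmf (map_pmf (\<lambda>\<omega>. (F \<omega>, G \<omega>)) M) uv
          * log b (pmf (map_pmf (\<lambda>\<omega>. (F \<omega>, G \<omega>)) M) uv / pmf (map_pmf G M) (snd uv)))"

end

theory Submission imports Defs begin

lemma gibbs:
  fixes w a :: "'a \<Rightarrow> real"
  assumes "finite S" "\<And>i. i \<in> S \<Longrightarrow> w i > 0" "\<And>i. i \<in> S \<Longrightarrow> a i > 0"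
    "(\<Sum>i\<in>S. w i * a i) \<le> K" "K > 0"
  shows "(\<Sum>i\<in>S. w i * ln (a i)) \<le> (\<Sum>i\<in>S. w i) * ln (K / (\<Sum>i\<in>S. w i))"
proof (cases "S = {}")
  case True then show ?thesis by simp
next
  case False
  define W where "W = (\<Sum>i\<in>S. w i)"
  have W: "W > 0" unfolding W_def using assms False by (intro sum_pos) auto
  have t: "w i * ln (a i) \<le> w i * (a i * W / K - 1 + ln (K / W))" if "i \<in> S" for i
  proof -
    have ai: "a i > 0" using assms(3)[OF that] .
    have pos: "a i * W / K > 0" using ai assms W by auto
    have "ln (a i * W / K) \<le> a i * W / K - 1" using ln_le_minus_one pos by blast
    moreover have "ln (a i * W / K) = ln (a i) - ln (K / W)"
      using pos ai assms W by (simp add: ln_div ln_mult)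
    ultimately have "ln (a i) \<le> a i * W / K - 1 + ln (K / W)" by linarith
    then show ?thesis using assms(2)[OF that] by (intro mult_left_mono) auto
  qed
  have "(\<Sum>i\<in>S. w i * ln (a i)) \<le> (\<Sum>i\<in>S. w i * (a i * W / K - 1 + ln (K / W)))"
    using t by (intro sum_mono) auto
  also have "\<dots> = (W / K) * (\<Sum>i\<in>S. w i * a i) - W + W * ln (K / W)"
    by (simp add: algebra_simps sum.distrib sum_subtractf sum_distrib_left sum_distrib_right W_def sum_divide_distrib)
  also have "\<dots> \<le> (W / K) * K - W + W * ln (K / W)"
    using assms W by (intro add_mono diff_mono mult_left_mono) auto
  also have "\<dots> = W * ln (K / W)" using assms by simp
  finally show ?thesis unfolding W_def .
qed

lemma sum_map_pmf:
  assumes "finite (set_pmf P)"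
  shows "(\<Sum>u\<in>set_pmf (map_pmf h P). pmf (map_pmf h P) u * f u) = (\<Sum>w\<in>set_pmf P. pmf P w * f (h w))"
proof -
  have "(\<Sum>u\<in>set_pmf (map_pmf h P). pmf (map_pmf h P) u * f u) = (\<integral>u. f u \<partial>measure_pmf (map_pmf h P))"
    using assms by (subst integral_measure_pmf_real[where A="set_pmf (map_pmf h P)"]) (auto simp: mult.commute)
  also have "\<dots> = (\<integral>w. f (h w) \<partial>measure_pmf P)" by simp
  also have "\<dots> = (\<Sum>w\<in>set_pmf P. pmf P w * f (h w))"
    using assms by (subst integral_measure_pmf_real[where A="set_pmf P"]) (auto simp: mult.commute)
  finally show ?thesis .
qed

lemma tele: fixes l n :: nat shows "l \<le> n \<Longrightarrow> (\<Sum>i\<in>{l+1..n}. (L (i - 1) - L i :: real)) = L l - L n"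
proof (induction n)
  case 0 then show ?case by simp
next
  case (Suc n)
  show ?case
  proof (cases "l = Suc n")
    case True then show ?thesis by simp
  next
    case False
    then have "l \<le> n" using Suc by simp
    then have "{l+1..Suc n} = insert (Suc n) {l+1..n}" by auto
    then show ?thesis using Suc.IH \<open>l \<le> n\<close> by simp
  qed
qed

lemma pr_cong:
  assumes "\<And>w'. w' \<in> set_pmf P \<Longrightarrow> f w' = f w \<longleftrightarrow> g w' = g w"
  shows "measure_pmf.prob P {w'. f w' = f w} = measure_pmf.prob P {w'. g w' = g w}"
proof -
  have "{w'. f w' = f w} \<inter> set_pmf P = {w'. g w' = g w} \<inter> set_pmf P" using assms by auto
  then show ?thesis by (metis measure_Int_set_pmf)
qed

lemma pr_pos:
  assumes "w \<in> set_pmf P"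
  shows "measure_pmf.prob P {w'. f w' = f w} \<ge> pmf P w" "pmf P w > 0"
proof -
  show "pmf P w > 0" using assms by (simp add: pmf_positive)
  have "measure_pmf.prob P {w} \<le> measure_pmf.prob P {w'. f w' = f w}"
    by (intro measure_pmf.finite_measure_mono) auto
  then show "measure_pmf.prob P {w'. f w' = f w} \<ge> pmf P w" by (simp add: measure_pmf_single)
qed

lemma pmf_map_pr: "pmf (map_pmf f P) (f w) = measure_pmf.prob P {w'. f w' = f w}"
  by (simp add: pmf_map vimage_def)

lemma ce_sum:
  assumes "finite (set_pmf P)"
  shows "cond_entropy b P F G = (\<Sum>w\<in>set_pmf P. - pmf P w *
     log b (measure_pmf.prob P {w'. (F w', G w') = (F w, G w)} / measure_pmf.prob P {w'. G w' = G w}))"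
proof -
  have "cond_entropy b P F G = (\<Sum>uv\<in>set_pmf (map_pmf (\<lambda>w. (F w, G w)) P).
        pmf (map_pmf (\<lambda>w. (F w, G w)) P) uv * (- log b (pmf (map_pmf (\<lambda>w. (F w, G w)) P) uv / pmf (map_pmf G P) (snd uv))))"
    unfolding cond_entropy_def by simp
  also have "\<dots> = (\<Sum>w\<in>set_pmf P. pmf P w * (- log b (pmf (map_pmf (\<lambda>w. (F w, G w)) P) (F w, G w) / pmf (map_pmf G P) (G w))))"
    using sum_map_pmf[OF assms, of "\<lambda>w. (F w, G w)" "\<lambda>uv. - log b (pmf (map_pmf (\<lambda>w. (F w, G w)) P) uv / pmf (map_pmf G P) (snd uv))"]
    by (simp only: snd_conv)
  also have "\<dots> = (\<Sum>w\<in>set_pmf P. - pmf P w *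
     log b (measure_pmf.prob P {w'. (F w', G w') = (F w, G w)} / measure_pmf.prob P {w'. G w' = G w}))"
    by (simp only: pmf_map_pr[of "\<lambda>w. (F w, G w)"] pmf_map_pr[of G] mult_minus_left mult_minus_right)
  finally show ?thesis .
qed


lemma take_nth_iff:
  assumes "i < length c" "i < length c'"
  shows "(c ! i = c' ! i \<and> take i c = take i c') \<longleftrightarrow> take (Suc i) c = take (Suc i) c'"
proof
  assume "c ! i = c' ! i \<and> take i c = take i c'"
  then show "take (Suc i) c = take (Suc i) c'" using assms by (simp add: take_Suc_conv_app_nth)
next
  assume h: "take (Suc i) c = take (Suc i) c'"
  then have "take i c = take i c'" by (metis min.idem take_take lessI less_imp_le min_absorb1)
  moreover have "c ! i = c' ! i" using h assms by (metis lessI nth_take)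
  ultimately show "c ! i = c' ! i \<and> take i c = take i c'" by simp
qed

theorem mainTheorem9:
  fixes P :: "('x::finite list \<times> 'y::finite list) pmf"
    and A :: "'x list \<Rightarrow> 'x list"
    and B :: "'x list \<Rightarrow> 'x list"
    and \<phi> :: "'x list \<Rightarrow> 'y list \<Rightarrow> 'x list"
    and n l :: nat
  assumes card_X: "CARD('x) \<ge> 2"
    and supp: "set_pmf P \<subseteq> {(x, y). length x = n \<and> length y = n}"
    and l_le: "l \<le> n"
    and A_len: "\<And>x. length x = n \<Longrightarrow> length (A x) = l"
    and B_len: "\<And>x. length x = n \<Longrightarrow> length (B x) = n - l"
    and T_bij: "bij_betw (\<lambda>x. A x @ B x) {x. length x = n} {x. length x = n}"
    and eps_pos: "measure_pmf.prob P {(x, y). \<phi> (A x) y \<noteq> x} > 0"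
  shows "(\<Sum>i\<in>{l+1..n}.
           cond_entropy (real CARD('x)) P
             (\<lambda>(x, y). (A x @ B x) ! (i - 1))
             (\<lambda>(x, y). (take (i - 1) (A x @ B x), y)))
         \<le> measure_pmf.prob P {(x, y). \<phi> (A x) y \<noteq> x}
           * (real n
              + log (real CARD('x)) (1 / measure_pmf.prob P {(x, y). \<phi> (A x) y \<noteq> x})
              + log (real CARD('x)) (exp 1))"
proof -
  define S where "S = set_pmf P"
  have finS: "finite S"
  proof (rule finite_subset)
    show "S \<subseteq> {x::'x list. set x \<subseteq> UNIV \<and> length x = n} \<times> {y::'y list. set y \<subseteq> UNIV \<and> length y = n}"
      using supp unfolding S_def by auto
    show "finite ({x::'x list. set x \<subseteq> UNIV \<and> length x = n} \<times> {y::'y list. set y \<subseteq> UNIV \<and> length y = n})"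
      by (intro finite_cartesian_product finite_lists_length_eq) auto
  qed
  have finP: "finite (set_pmf P)" using finS S_def by simp
  have lenS: "length x = n" "length y = n" if "(x, y) \<in> S" for x y using that supp S_def by auto
  define q where "q = real CARD('x)"
  have q2: "q \<ge> 2" using card_X q_def by simp
  have lnq: "ln q > 0" using q2 by simp
  define Z where "Z k = (\<lambda>(x::'x list, y::'y list). (take k (A x @ B x), y))" for k
  define L where "L k w = log q (measure_pmf.prob P {w'. Z k w' = Z k w})" for k w
  define g where "g = (\<lambda>(x::'x list, y::'y list). (A x, y))"
  define E where "E = {(x::'x list, y::'y list). \<phi> (A x) y \<noteq> x}"
  define eps where "eps = measure_pmf.prob P E"
  define pg where "pg w = measure_pmf.prob P {w'. g w' = g w}" for w
  define p where "p w = pmf P w" for w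
  have ppos: "p w > 0" if "w \<in> S" for w using that pr_pos S_def p_def by auto
  have pgpos: "pg w > 0" if "w \<in> S" for w unfolding pg_def
  proof -
    have w: "w \<in> set_pmf P" using that S_def by simp
    show "measure_pmf.prob P {w'. g w' = g w} > 0" using pr_pos(1)[OF w, of g] pr_pos(2)[OF w] by linarith
  qed
  have Zpos: "measure_pmf.prob P {w'. Z k w' = Z k w} > 0" if "w \<in> S" for w k
    proof -
    have w: "w \<in> set_pmf P" using that S_def by simp
    show ?thesis using pr_pos(1)[OF w, of "Z k"] pr_pos(2)[OF w] by linarith
  qed
  have clen: "length (A x @ B x) = n" if "(x, y) \<in> S" for x y
    using lenS[OF that] A_len B_len l_le by simp
  have step1: "cond_entropy q P (\<lambda>(x, y). (A x @ B x) ! (i - 1)) (\<lambda>(x, y). (take (i - 1) (A x @ B x), y))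
     = (\<Sum>w\<in>S. p w * (L (i - 1) w - L i w))" if i: "i \<in> {l+1..n}" for i
  proof -
    have "cond_entropy q P (\<lambda>(x, y). (A x @ B x) ! (i - 1)) (\<lambda>(x, y). (take (i - 1) (A x @ B x), y))
      = (\<Sum>w\<in>S. - pmf P w * log q (measure_pmf.prob P {w'. ((\<lambda>(x, y). (A x @ B x) ! (i - 1)) w', Z (i - 1) w') = ((\<lambda>(x, y). (A x @ B x) ! (i - 1)) w, Z (i - 1) w)}
            / measure_pmf.prob P {w'. Z (i - 1) w' = Z (i - 1) w}))"
      unfolding S_def Z_def by (rule ce_sum[OF finP])
    also have "\<dots> = (\<Sum>w\<in>S. p w * (L (i - 1) w - L i w))"
    proof (rule sum.cong[OF refl])
      fix w assume w: "w \<in> S"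
      obtain x y where xy: "w = (x, y)" by force
      have eq: "measure_pmf.prob P {w'. ((\<lambda>(x, y). (A x @ B x) ! (i - 1)) w', Z (i - 1) w') = ((\<lambda>(x, y). (A x @ B x) ! (i - 1)) w, Z (i - 1) w)}
          = measure_pmf.prob P {w'. Z i w' = Z i w}"
      proof (rule pr_cong)
        fix w' assume w': "w' \<in> set_pmf P"
        obtain x' y' where xy': "w' = (x', y')" by force
        have i1: "i - 1 < length (A x @ B x)" "i - 1 < length (A x' @ B x')"
          using clen[of x y] clen[of x' y'] w w' xy xy' i S_def by auto
        have si: "Suc (i - 1) = i" using i by auto
        show "(((\<lambda>(x, y). (A x @ B x) ! (i - 1)) w', Z (i - 1) w') = ((\<lambda>(x, y). (A x @ B x) ! (i - 1)) w, Z (i - 1) w)) = (Z i w' = Z i w)"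
          using take_nth_iff[OF i1(2) i1(1)] si unfolding xy xy' Z_def by auto
      qed
      show "- pmf P w * log q (measure_pmf.prob P {w'. ((\<lambda>(x, y). (A x @ B x) ! (i - 1)) w', Z (i - 1) w') = ((\<lambda>(x, y). (A x @ B x) ! (i - 1)) w, Z (i - 1) w)}
            / measure_pmf.prob P {w'. Z (i - 1) w' = Z (i - 1) w}) = p w * (L (i - 1) w - L i w)"
        unfolding eq L_def p_def using Zpos[OF w, of i] Zpos[OF w, of "i - 1"]
        by (simp add: log_divide algebra_simps)
    qed
    finally show ?thesis .
  qed
  have Ln: "L n w = log q (p w)" if w: "w \<in> S" for w
  proof -
    have "measure_pmf.prob P {w'. Z n w' = Z n w} = measure_pmf.prob P {w'. w' = w}"
    proof (rule pr_cong)
      fix w' assume w': "w' \<in> set_pmf P"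
      obtain x y where xy: "w = (x, y)" by force
      obtain x' y' where xy': "w' = (x', y')" by force
      have c: "length (A x @ B x) = n" "length (A x' @ B x') = n"
        using clen w w' xy xy' S_def by auto
      have "inj_on (\<lambda>x. A x @ B x) {x. length x = n}" using T_bij bij_betw_imp_inj_on by blast
      moreover have "length x = n" "length x' = n" using lenS w w' xy xy' S_def by auto
      ultimately have "A x' @ B x' = A x @ B x \<longleftrightarrow> x' = x" by (auto dest: inj_onD)
      then show "(Z n w' = Z n w) = (w' = w)" unfolding Z_def xy xy' using c by auto
    qed
    then show ?thesis unfolding L_def p_def by (simp add: measure_pmf_single)
  qed
  have Ll: "L l w = log q (pg w)" if w: "w \<in> S" for w
  proof -
    have "measure_pmf.prob P {w'. Z l w' = Z l w} = measure_pmf.prob P {w'. g w' = g w}"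
    proof (rule pr_cong)
      fix w' assume w': "w' \<in> set_pmf P"
      obtain x y where xy: "w = (x, y)" by force
      obtain x' y' where xy': "w' = (x', y')" by force
      have "length x = n" "length x' = n" using lenS w w' xy xy' S_def by auto
      then have "length (A x) = l" "length (A x') = l" using A_len by auto
      then show "(Z l w' = Z l w) = (g w' = g w)" unfolding Z_def g_def xy xy' by auto
    qed
    then show ?thesis unfolding L_def pg_def by simp
  qed
  have LHS: "(\<Sum>i\<in>{l+1..n}. cond_entropy q P (\<lambda>(x, y). (A x @ B x) ! (i - 1)) (\<lambda>(x, y). (take (i - 1) (A x @ B x), y)))
     = (\<Sum>w\<in>S. p w * ln (pg w / p w)) / ln q"
  proof -
    have "(\<Sum>i\<in>{l+1..n}. cond_entropy q P (\<lambda>(x, y). (A x @ B x) ! (i - 1)) (\<lambda>(x, y). (take (i - 1) (A x @ B x), y)))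
       = (\<Sum>i\<in>{l+1..n}. \<Sum>w\<in>S. p w * (L (i - 1) w - L i w))" using step1 by (rule sum.cong[OF refl])
    also have "\<dots> = (\<Sum>w\<in>S. p w * (\<Sum>i\<in>{l+1..n}. L (i - 1) w - L i w))"
      by (subst sum.swap) (simp add: sum_distrib_left)
    also have "\<dots> = (\<Sum>w\<in>S. p w * (L l w - L n w))"
      by (rule sum.cong[OF refl]) (simp only: tele[OF l_le, of "\<lambda>i. L i _"])
    also have "\<dots> = (\<Sum>w\<in>S. p w * ln (pg w / p w) / ln q)"
    proof (rule sum.cong[OF refl])
      fix w assume w: "w \<in> S"
      have "L l w - L n w = ln (pg w / p w) / ln q"
        using Ln[OF w] Ll[OF w] ppos[OF w] pgpos[OF w]
        by (simp add: log_def ln_div diff_divide_distrib)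
      then show "p w * (L l w - L n w) = p w * ln (pg w / p w) / ln q" by simp
    qed
    also have "\<dots> = (\<Sum>w\<in>S. p w * ln (pg w / p w)) / ln q" by (simp add: sum_divide_distrib)
    finally show ?thesis .
  qed
  have eps_sum: "eps = (\<Sum>w\<in>S \<inter> E. p w)"
  proof -
    have "eps = measure_pmf.prob P (E \<inter> S)" unfolding eps_def S_def by (simp add: measure_Int_set_pmf)
    also have "\<dots> = (\<Sum>w\<in>S \<inter> E. p w)" using finS by (simp add: measure_measure_pmf_finite p_def Int_commute)
    finally show ?thesis .
  qed
  have W_sum: "(\<Sum>w\<in>S - E. p w) = 1 - eps"
  proof -
    have "(\<Sum>w\<in>S. p w) = 1" unfolding p_def S_def using finP by (simp add: sum_pmf_eq_1)
    moreover have "(\<Sum>w\<in>S. p w) = (\<Sum>w\<in>S \<inter> E. p w) + (\<Sum>w\<in>S - E. p w)"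
      using finS by (rule sum.Int_Diff)
    ultimately show ?thesis using eps_sum by simp
  qed
  have split: "(\<Sum>w\<in>S. p w * ln (pg w / p w)) = (\<Sum>w\<in>S \<inter> E. p w * ln (pg w / p w)) + (\<Sum>w\<in>S - E. p w * ln (pg w / p w))"
    using finS by (rule sum.Int_Diff)
  have inj: "inj_on g (S - E)"
  proof (rule inj_onI)
    fix w w' assume w: "w \<in> S - E" and w': "w' \<in> S - E" and gw: "g w = g w'"
    obtain x y where xy: "w = (x, y)" by force
    obtain x' y' where xy': "w' = (x', y')" by force
    have "(x, y) \<notin> E" using w xy by simp
    then have 1: "\<phi> (A x) y = x" unfolding E_def by simp
    have "(x', y') \<notin> E" using w' xy' by simp
    then have 2: "\<phi> (A x') y' = x'" unfolding E_def by simp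
    have "g (x, y) = g (x', y')" using gw xy xy' by simp
    then have 3: "A x = A x'" "y = y'" unfolding g_def by simp_all
    have "x = x'" using 1 2 3 by metis
    then show "w = w'" using xy xy' 3 by simp
  qed
  have corr_sum: "(\<Sum>w\<in>S - E. p w * (pg w / p w)) \<le> 1"
  proof -
    have "(\<Sum>w\<in>S - E. p w * (pg w / p w)) = (\<Sum>w\<in>S - E. pmf (map_pmf g P) (g w))"
    proof (rule sum.cong[OF refl])
      fix w assume "w \<in> S - E"
      then have "p w > 0" using ppos by simp
      then show "p w * (pg w / p w) = pmf (map_pmf g P) (g w)" by (simp add: pg_def pmf_map_pr)
    qed
    also have "\<dots> = (\<Sum>z\<in>g ` (S - E). pmf (map_pmf g P) z)"
      using inj by (simp add: sum.reindex)
    also have "\<dots> = measure_pmf.prob (map_pmf g P) (g ` (S - E))"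
      using finS by (intro measure_measure_pmf_finite[symmetric] finite_imageI finite_Diff)
    also have "\<dots> \<le> 1" by (rule measure_pmf.prob_le_1)
    finally show ?thesis .
  qed
  have corr: "(\<Sum>w\<in>S - E. p w * ln (pg w / p w)) \<le> eps"
  proof -
    have "(\<Sum>w\<in>S - E. p w * ln (pg w / p w)) \<le> (\<Sum>w\<in>S - E. p w) * ln (1 / (\<Sum>w\<in>S - E. p w))"
      using finS ppos pgpos corr_sum by (intro gibbs) auto
    also have "\<dots> \<le> eps"
    proof (cases "1 - eps = 0")
      case True then show ?thesis using W_sum eps_def by simp
    next
      case False
      have "1 - eps \<ge> 0" using W_sum ppos by (metis sum_nonneg less_imp_le DiffD1)
      with False have W: "1 - eps > 0" by simp
      have "ln (1 / (1 - eps)) \<le> 1 / (1 - eps) - 1" using W by (intro ln_le_minus_one) auto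
      then have "(1 - eps) * ln (1 / (1 - eps)) \<le> (1 - eps) * (1 / (1 - eps) - 1)"
        using W by (intro mult_left_mono) auto
      also have "\<dots> = eps" using W by (simp add: algebra_simps)
      finally show ?thesis using W_sum by simp
    qed
    finally show ?thesis .
  qed
  have pg_sum: "pg w = (\<Sum>w'\<in>S. if g w' = g w then p w' else 0)" for w
  proof -
    have "pg w = measure_pmf.prob P ({w'. g w' = g w} \<inter> S)" unfolding pg_def S_def by (simp add: measure_Int_set_pmf)
    also have "\<dots> = (\<Sum>w'\<in>{w' \<in> S. g w' = g w}. p w')"
    proof -
      have "{w'. g w' = g w} \<inter> S = {w' \<in> S. g w' = g w}" by blast
      moreover have "finite {w' \<in> S. g w' = g w}" using finS by simp
      ultimately show ?thesis unfolding p_def by (simp only: measure_measure_pmf_finite)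
    qed
    also have "\<dots> = (\<Sum>w'\<in>S. if g w' = g w then p w' else 0)" using finS by (simp add: sum.inter_filter)
    finally show ?thesis .
  qed
  have card_fib: "card {w\<in>S. g w' = g w} \<le> CARD('x) ^ n" for w'
  proof -
    have "{w\<in>S. g w' = g w} \<subseteq> (\<lambda>x. (x, snd w')) ` {x::'x list. set x \<subseteq> UNIV \<and> length x = n}"
    proof
      fix w assume w: "w \<in> {w\<in>S. g w' = g w}"
      obtain x y where xy: "w = (x, y)" by force
      have "length x = n" using lenS w xy by auto
      moreover have "y = snd w'" using w xy unfolding g_def by (cases w') auto
      ultimately show "w \<in> (\<lambda>x. (x, snd w')) ` {x::'x list. set x \<subseteq> UNIV \<and> length x = n}" using xy by auto
    qed
    then have "card {w\<in>S. g w' = g w} \<le> card ((\<lambda>x. (x, snd w')) ` {x::'x list. set x \<subseteq> UNIV \<and> length x = n})"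
      by (intro card_mono finite_imageI finite_lists_length_eq) auto
    also have "\<dots> \<le> card {x::'x list. set x \<subseteq> UNIV \<and> length x = n}" by (rule card_image_le) (intro finite_lists_length_eq; simp)
    also have "\<dots> = CARD('x) ^ n" using card_lists_length_eq[of "UNIV::'x set" n] by simp
    finally show ?thesis .
  qed
  have err_sum: "(\<Sum>w\<in>S \<inter> E. p w * (pg w / p w)) \<le> q ^ n"
  proof -
    have "(\<Sum>w\<in>S \<inter> E. p w * (pg w / p w)) = (\<Sum>w\<in>S \<inter> E. pg w)"
    proof (rule sum.cong[OF refl])
      fix w assume "w \<in> S \<inter> E"
      then have "p w > 0" using ppos by simp
      then show "p w * (pg w / p w) = pg w" by simp
    qed
    also have "\<dots> \<le> (\<Sum>w\<in>S. pg w)" using finS pgpos by (intro sum_mono2) (auto intro: less_imp_le)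
    also have "\<dots> = (\<Sum>w'\<in>S. \<Sum>w\<in>S. if g w' = g w then p w' else 0)"
      unfolding pg_sum by (rule sum.swap)
    also have "\<dots> = (\<Sum>w'\<in>S. p w' * real (card {w\<in>S. g w' = g w}))"
      using finS by (simp add: sum.inter_filter[symmetric] mult.commute)
    also have "\<dots> \<le> (\<Sum>w'\<in>S. p w' * q ^ n)"
    proof (rule sum_mono)
      fix w' assume "w' \<in> S"
      have "real (card {w\<in>S. g w' = g w}) \<le> q ^ n" using card_fib[of w'] unfolding q_def
        by (metis of_nat_le_iff of_nat_power)
      then show "p w' * real (card {w\<in>S. g w' = g w}) \<le> p w' * q ^ n"
        using ppos[OF \<open>w' \<in> S\<close>] by (intro mult_left_mono) auto
    qed
    also have "\<dots> = q ^ n" using finP unfolding p_def S_def by (simp add: sum_distrib_right[symmetric] sum_pmf_eq_1)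
    finally show ?thesis .
  qed
  have epspos: "eps > 0" using eps_pos unfolding eps_def E_def .
  have err: "(\<Sum>w\<in>S \<inter> E. p w * ln (pg w / p w)) \<le> eps * (n * ln q + ln (1 / eps))"
  proof -
    have "(\<Sum>w\<in>S \<inter> E. p w * ln (pg w / p w)) \<le> (\<Sum>w\<in>S \<inter> E. p w) * ln (q ^ n / (\<Sum>w\<in>S \<inter> E. p w))"
      using finS ppos pgpos err_sum q2 by (intro gibbs) auto
    also have "\<dots> = eps * (n * ln q + ln (1 / eps))"
      using epspos q2 eps_sum by (simp add: ln_div ln_realpow)
    finally show ?thesis .
  qed
  have fin: "(\<Sum>w\<in>S. p w * ln (pg w / p w)) / ln q \<le> eps * (real n + log q (1 / eps) + log q (exp 1))"
  proof -
    have "(\<Sum>w\<in>S. p w * ln (pg w / p w)) \<le> eps * (n * ln q + ln (1 / eps)) + eps"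
      using split err corr by linarith
    also have "\<dots> = (eps * (real n + log q (1 / eps) + log q (exp 1))) * ln q"
      using lnq by (simp add: log_def field_simps)
    finally show ?thesis using lnq by (simp add: pos_divide_le_eq)
  qed
  show ?thesis unfolding q_def[symmetric] E_def[symmetric] eps_def[symmetric] using LHS fin by (simp only:)
qed

end
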